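(* Let $(\mathcal{X},\tau,\mathcal{F})$ be either (a) the inverse image of a locally measurable vector space $(\mathcal{X}_1,\tau_1,\mathcal{F}_1)$ under a linear map $f_1\colon\mathcal{X}\to\mathcal{X}_1$ (in which case set $I=\{1\}$), or (b) the projective limit of a projective system of locally measurable vector spaces $(\mathcal{X}_i,\tau_i,\mathcal{F}_i,f_{i,j})_{i\le j}$ indexed by a directed preordered set $(I,\le)$, with canonical projections $f_i\colon\mathcal{X}\to\mathcal{X}_i$. For each $i\in I$ and $x_i\in\mathcal{X}_i$ let $\mathcal{V}_{i,x_i}$ be a local basis of neighborhoods of $x_i$ in $(\mathcal{X}_i,\tau_i)$ consisting of $\mathcal{F}_i$-measurable sets. Then for every $x\in\mathcal{X}$, the set $\mathcal{V}_x:=\{f_i^{-1}(V_i) : i\in I,\ V_i\in\mathcal{V}_{i,f_i(x)}\}$ is a local basis of neighborhoods of $x$ in $(\mathcal{X},\tau)$. In particular, every point of $\mathcal{X}$ admits a local basis of neighborhoods consisting of $\mathcal{F}$-measurable sets.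
   Context: A locally measurable vector space is a triple $(\mathcal{Y},\sigma,\mathcal{G})$ with $\mathcal{Y}$ a real vector space, $\sigma$ a (not necessarily Hausdorff) vector space topology, $\mathcal{G}$ a $\sigma$-algebra, such that every point admits a local basis of neighborhoods belonging to $\mathcal{G}$ and every continuous linear functional is $\mathcal{G}$-measurable. Inverse image: $\tau$ and $\mathcal{F}$ are the initial topology and initial $\sigma$-algebra on the vector space $\mathcal{X}$ with respect to $f_1$. Projective system: $(I,\le)$ directed preordered set, $f_{i,j}\colon\mathcal{X}_j\to\mathcal{X}_i$ for $i\le j$ measurable, continuous and linear, $f_{i,i}=\mathrm{id}$, $f_{i,k}=f_{i,j}\circ f_{j,k}$ for $i\le j\le k$; the projective limit is $\mathcal{X}=\{(x_i)\in\prod_i\mathcal{X}_i: x_i=f_{i,j}(x_j)\ \forall i\le j\}$ with $f_i$ the coordinate projections, and $\tau$, $\mathcal{F}$ the initial topology and initial $\sigma$-algebra with respect to $(f_i)_{i\in I}$. *)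

theory Defs
  imports "HOL-Analysis.Analysis"
begin

text \<open>Real vector spaces are represented as linear subspaces Y of an ambient real vector
  space type (possibly the whole type, Y = UNIV).\<close>

definition linear_on :: "'a::real_vector set \<Rightarrow> ('a \<Rightarrow> 'b::real_vector) \<Rightarrow> bool" where
  "linear_on Y \<phi> \<longleftrightarrow>
     (\<forall>x\<in>Y. \<forall>y\<in>Y. \<phi> (x + y) = \<phi> x + \<phi> y) \<and> (\<forall>c. \<forall>x\<in>Y. \<phi> (c *\<^sub>R x) = c *\<^sub>R \<phi> x)"

definition vector_space_topology :: "'a::real_vector set \<Rightarrow> 'a topology \<Rightarrow> bool" where
  "vector_space_topology Y T \<longleftrightarrow>
     subspace Y \<and> topspace T = Y \<and>
     continuous_map (prod_topology T T) T (\<lambda>(x, y). x + y) \<and>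
     continuous_map (prod_topology euclideanreal T) T (\<lambda>(c, x). c *\<^sub>R x)"

definition is_nbhd :: "'a topology \<Rightarrow> 'a \<Rightarrow> 'a set \<Rightarrow> bool" where
  "is_nbhd T x N \<longleftrightarrow> N \<subseteq> topspace T \<and> (\<exists>U. openin T U \<and> x \<in> U \<and> U \<subseteq> N)"

definition local_basis :: "'a topology \<Rightarrow> 'a \<Rightarrow> 'a set set \<Rightarrow> bool" where
  "local_basis T x \<V> \<longleftrightarrow>
     (\<forall>V\<in>\<V>. is_nbhd T x V) \<and> (\<forall>N. is_nbhd T x N \<longrightarrow> (\<exists>V\<in>\<V>. V \<subseteq> N))"

definition locally_measurable_vs :: "'a::real_vector set \<Rightarrow> 'a topology \<Rightarrow> 'a set set \<Rightarrow> bool" where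
  "locally_measurable_vs Y T G \<longleftrightarrow>
     vector_space_topology Y T \<and> sigma_algebra Y G \<and>
     (\<forall>x\<in>Y. \<exists>\<V>. local_basis T x \<V> \<and> \<V> \<subseteq> G) \<and>
     (\<forall>\<phi>::'a \<Rightarrow> real. linear_on Y \<phi> \<and> continuous_map T euclideanreal \<phi> \<longrightarrow>
        (\<forall>B\<in>sets borel. \<phi> -` B \<inter> Y \<in> G))"

definition initial_topology :: "'x set \<Rightarrow> 'i set \<Rightarrow> ('i \<Rightarrow> 'x \<Rightarrow> 'y) \<Rightarrow> ('i \<Rightarrow> 'y topology) \<Rightarrow> 'x topology" where
  "initial_topology X I f T =
     topology_generated_by (insert X {f i -` U \<inter> X | i U. i \<in> I \<and> openin (T i) U})"

definition initial_sigma :: "'x set \<Rightarrow> 'i set \<Rightarrow> ('i \<Rightarrow> 'x \<Rightarrow> 'y) \<Rightarrow> ('i \<Rightarrow> 'y set set) \<Rightarrow> 'x set set" where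
  "initial_sigma X I f G = sigma_sets X {f i -` A \<inter> X | i A. i \<in> I \<and> A \<in> G i}"

definition directed_preorder :: "'i set \<Rightarrow> ('i \<Rightarrow> 'i \<Rightarrow> bool) \<Rightarrow> bool" where
  "directed_preorder I le \<longleftrightarrow> I \<noteq> {} \<and> (\<forall>i\<in>I. le i i) \<and>
     (\<forall>i\<in>I. \<forall>j\<in>I. \<forall>k\<in>I. le i j \<and> le j k \<longrightarrow> le i k) \<and>
     (\<forall>i\<in>I. \<forall>j\<in>I. \<exists>k\<in>I. le i k \<and> le j k)"

definition projective_system ::
  "'i set \<Rightarrow> ('i \<Rightarrow> 'i \<Rightarrow> bool) \<Rightarrow> ('i \<Rightarrow> 'b::real_vector set) \<Rightarrow> ('i \<Rightarrow> 'b topology)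
   \<Rightarrow> ('i \<Rightarrow> 'b set set) \<Rightarrow> ('i \<Rightarrow> 'i \<Rightarrow> 'b \<Rightarrow> 'b) \<Rightarrow> bool" where
  "projective_system I le Xs T G f \<longleftrightarrow>
     directed_preorder I le \<and>
     (\<forall>i\<in>I. locally_measurable_vs (Xs i) (T i) (G i)) \<and>
     (\<forall>i\<in>I. \<forall>j\<in>I. le i j \<longrightarrow>
        f i j ` Xs j \<subseteq> Xs i \<and> linear_on (Xs j) (f i j) \<and>
        continuous_map (T j) (T i) (f i j) \<and>
        (\<forall>A\<in>G i. f i j -` A \<inter> Xs j \<in> G j)) \<and>
     (\<forall>i\<in>I. \<forall>x\<in>Xs i. f i i x = x) \<and>
     (\<forall>i\<in>I. \<forall>j\<in>I. \<forall>k\<in>I. le i j \<and> le j k \<longrightarrow> (\<forall>x\<in>Xs k. f i k x = f i j (f j k x)))"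

definition proj_limit ::
  "'i set \<Rightarrow> ('i \<Rightarrow> 'i \<Rightarrow> bool) \<Rightarrow> ('i \<Rightarrow> 'b set) \<Rightarrow> ('i \<Rightarrow> 'i \<Rightarrow> 'b \<Rightarrow> 'b) \<Rightarrow> ('i \<Rightarrow> 'b) set" where
  "proj_limit I le Xs f = {x \<in> PiE I Xs. \<forall>i\<in>I. \<forall>j\<in>I. le i j \<longrightarrow> x i = f i j (x j)}"

end

theory Submission
  imports Defs
begin

lemma part_a:
  fixes f1 :: "'a::real_vector \<Rightarrow> 'c::real_vector"
  assumes lm: "locally_measurable_vs UNIV T1 G1"
    and vb: "\<forall>y. local_basis T1 y (\<V> y) \<and> \<V> y \<subseteq> G1"
  shows "local_basis (pullback_topology UNIV f1 T1) x {f1 -` V | V. V \<in> \<V> (f1 x)}"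
proof -
  have ts: "topspace T1 = UNIV" using lm unfolding locally_measurable_vs_def vector_space_topology_def by auto
  have ts2: "topspace (pullback_topology UNIV f1 T1) = UNIV"
    by (simp add: topspace_pullback_topology ts)
  have lb: "local_basis T1 (f1 x) (\<V> (f1 x))" using vb by auto
  show ?thesis
    unfolding local_basis_def
  proof safe
    fix V assume "V \<in> \<V> (f1 x)"
    then have "is_nbhd T1 (f1 x) V" using lb unfolding local_basis_def by auto
    then obtain U where U: "openin T1 U" "f1 x \<in> U" "U \<subseteq> V" unfolding is_nbhd_def by auto
    have "openin (pullback_topology UNIV f1 T1) (f1 -` U)"
      using U(1) by (auto simp: openin_pullback_topology)
    then show "is_nbhd (pullback_topology UNIV f1 T1) x (f1 -` V)"
      unfolding is_nbhd_def ts2 using U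
      by (intro conjI exI[of _ "f1 -` U"]) auto
  next
    fix N assume "is_nbhd (pullback_topology UNIV f1 T1) x N"
    then obtain S where S: "openin (pullback_topology UNIV f1 T1) S" "x \<in> S" "S \<subseteq> N"
      unfolding is_nbhd_def by auto
    then obtain U where U: "openin T1 U" "S = f1 -` U" by (auto simp: openin_pullback_topology)
    have "is_nbhd T1 (f1 x) U" unfolding is_nbhd_def using U S openin_subset by auto
    then obtain V where V: "V \<in> \<V> (f1 x)" "V \<subseteq> U" using lb unfolding local_basis_def by blast
    show "\<exists>W\<in>{f1 -` V | V. V \<in> \<V> (f1 x)}. W \<subseteq> N"
      using V U S by (intro bexI[of _ "f1 -` V"]) auto
  qed
qed

lemma gen_key:
  assumes ps: "projective_system I le Xs T G f"
    and gen: "generate_topology_on (insert X {(\<lambda>x. x i) -` U \<inter> X | i U. i \<in> I \<and> openin (T i) U}) s"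
    and X: "X = proj_limit I le Xs f"
  shows "x \<in> X \<Longrightarrow> x \<in> s \<Longrightarrow> \<exists>k\<in>I. \<exists>W. openin (T k) W \<and> x k \<in> W \<and> (\<lambda>z. z k) -` W \<inter> X \<subseteq> s"
  using gen
proof (induction arbitrary: x rule: generate_topology_on.induct)
  case Empty
  then show ?case by simp
next
  case (Int a b)
  from Int obtain k1 W1 where A: "k1 \<in> I" "openin (T k1) W1" "x k1 \<in> W1" "(\<lambda>z. z k1) -` W1 \<inter> X \<subseteq> a" by blast
  from Int obtain k2 W2 where B: "k2 \<in> I" "openin (T k2) W2" "x k2 \<in> W2" "(\<lambda>z. z k2) -` W2 \<inter> X \<subseteq> b" by blast
  have dp: "directed_preorder I le" using ps unfolding projective_system_def by auto
  then obtain k where k: "k \<in> I" "le k1 k" "le k2 k" using A(1) B(1) unfolding directed_preorder_def by blast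
  have c1: "continuous_map (T k) (T k1) (f k1 k)" and c2: "continuous_map (T k) (T k2) (f k2 k)"
    using ps k A(1) B(1) unfolding projective_system_def by auto
  have tsk: "topspace (T k) = Xs k" using ps k(1)
    unfolding projective_system_def locally_measurable_vs_def vector_space_topology_def by auto
  define W where "W = {y \<in> topspace (T k). f k1 k y \<in> W1} \<inter> {y \<in> topspace (T k). f k2 k y \<in> W2}"
  have oW: "openin (T k) W" unfolding W_def
    using openin_continuous_map_preimage[OF c1 A(2)] openin_continuous_map_preimage[OF c2 B(2)] by blast
  have xX: "x \<in> proj_limit I le Xs f" using Int X by simp
  have xk: "x k \<in> Xs k" using xX k(1) unfolding proj_limit_def by (auto simp: PiE_iff)
  have e1: "\<And>z. z \<in> X \<Longrightarrow> z k1 = f k1 k (z k)" using X A(1) k unfolding proj_limit_def by auto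
  have e2: "\<And>z. z \<in> X \<Longrightarrow> z k2 = f k2 k (z k)" using X B(1) k unfolding proj_limit_def by auto
  have "x k \<in> W" unfolding W_def tsk using xk e1[OF Int.prems(1)] e2[OF Int.prems(1)] A(3) B(3) by auto
  moreover have "(\<lambda>z. z k) -` W \<inter> X \<subseteq> a \<inter> b"
    using A(4) B(4) e1 e2 unfolding W_def by auto
  ultimately show ?case using k(1) oW by blast
next
  case (UN K)
  then obtain k where "k \<in> K" "x \<in> k" by auto
  with UN obtain j W where "j \<in> I" "openin (T j) W" "x j \<in> W" "(\<lambda>z. z j) -` W \<inter> X \<subseteq> k" by meson
  then show ?case using \<open>k \<in> K\<close> by blast
next
  case (Basis s)
  show ?case
  proof (cases "s = X")
    case True
    have dp: "directed_preorder I le" using ps unfolding projective_system_def by auto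
    then obtain i where i: "i \<in> I" unfolding directed_preorder_def by auto
    have tsi: "topspace (T i) = Xs i" using ps i
      unfolding projective_system_def locally_measurable_vs_def vector_space_topology_def by auto
    have "x i \<in> Xs i" using Basis.prems(1) X i unfolding proj_limit_def by (auto simp: PiE_iff)
    then show ?thesis using i True
      by (intro bexI[OF _ i] exI[of _ "Xs i"]) (metis Int_lower2 openin_topspace tsi)
  next
    case False
    then obtain i U where "i \<in> I" "openin (T i) U" "s = (\<lambda>x. x i) -` U \<inter> X" using Basis.hyps by auto
    then show ?thesis using Basis.prems by blast
  qed
qed

lemma part_b:
  assumes ps: "projective_system I le Xs T G f"
    and vb: "\<forall>i\<in>I. \<forall>y\<in>Xs i. local_basis (T i) y (\<V> i y) \<and> \<V> i y \<subseteq> G i"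
    and X: "X = proj_limit I le Xs f"
    and xX: "x \<in> X"
  shows "local_basis (initial_topology X I (\<lambda>i x. x i) T) x
           {(\<lambda>x. x i) -` V \<inter> X | i V. i \<in> I \<and> V \<in> \<V> i (x i)}"
proof -
  let ?S = "insert X {(\<lambda>x. x i) -` U \<inter> X | i U. i \<in> I \<and> openin (T i) U}"
  have ts: "topspace (initial_topology X I (\<lambda>i x. x i) T) = X"
    unfolding initial_topology_def topology_generated_by_topspace by auto
  have xi: "\<And>i. i \<in> I \<Longrightarrow> x i \<in> Xs i" using xX X unfolding proj_limit_def by (auto simp: PiE_iff)
  show ?thesis
    unfolding local_basis_def
  proof safe
    fix i V assume i: "i \<in> I" and V: "V \<in> \<V> i (x i)"
    have "is_nbhd (T i) (x i) V" using vb i xi[OF i] V unfolding local_basis_def by auto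
    then obtain U where U: "openin (T i) U" "x i \<in> U" "U \<subseteq> V" unfolding is_nbhd_def by auto
    have "openin (initial_topology X I (\<lambda>i x. x i) T) ((\<lambda>x. x i) -` U \<inter> X)"
      unfolding initial_topology_def using i U(1) by (intro topology_generated_by_Basis) blast
    then show "is_nbhd (initial_topology X I (\<lambda>i x. x i) T) x ((\<lambda>x. x i) -` V \<inter> X)"
      unfolding is_nbhd_def ts using U xX
      by (intro conjI exI[of _ "(\<lambda>x. x i) -` U \<inter> X"]) auto
  next
    fix N assume "is_nbhd (initial_topology X I (\<lambda>i x. x i) T) x N"
    then obtain S where S: "openin (initial_topology X I (\<lambda>i x. x i) T) S" "x \<in> S" "S \<subseteq> N"
      unfolding is_nbhd_def by auto
    have "generate_topology_on ?S S" using S(1) unfolding initial_topology_def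
      by (rule openin_topology_generated_by)
    from gen_key[OF ps this X xX S(2)] obtain k W where
      kW: "k \<in> I" "openin (T k) W" "x k \<in> W" "(\<lambda>z. z k) -` W \<inter> X \<subseteq> S" by blast
    have "is_nbhd (T k) (x k) W" unfolding is_nbhd_def using kW openin_subset by blast
    then obtain V where V: "V \<in> \<V> k (x k)" "V \<subseteq> W" using vb kW(1) xi[OF kW(1)] unfolding local_basis_def by blast
    show "\<exists>W\<in>{(\<lambda>x. x i) -` V \<inter> X | i V. i \<in> I \<and> V \<in> \<V> i (x i)}. W \<subseteq> N"
      using V kW S by (intro bexI[of _ "(\<lambda>x. x k) -` V \<inter> X"]) auto
  qed
qed


theorem proposition3p1:
  shows
  "\<comment> \<open>(a) inverse image\<close>
   (\<forall>(f1 :: 'a::real_vector \<Rightarrow> 'c::real_vector) T1 G1 \<V>.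
      locally_measurable_vs UNIV T1 G1 \<and> linear f1 \<and>
      (\<forall>y. local_basis T1 y (\<V> y) \<and> \<V> y \<subseteq> G1) \<longrightarrow>
      (let \<tau> = pullback_topology UNIV f1 T1;
           \<F> = sigma_sets UNIV {f1 -` A | A. A \<in> G1}
       in (\<forall>x. local_basis \<tau> x {f1 -` V | V. V \<in> \<V> (f1 x)}) \<and>
          (\<forall>x. \<exists>\<W>. local_basis \<tau> x \<W> \<and> \<W> \<subseteq> \<F>)))
   \<and>
   \<comment> \<open>(b) projective limit\<close>
   (\<forall>(I :: 'i set) le (Xs :: 'i \<Rightarrow> 'b::real_vector set) T G f \<V>.
      projective_system I le Xs T G f \<and>
      (\<forall>i\<in>I. \<forall>y\<in>Xs i. local_basis (T i) y (\<V> i y) \<and> \<V> i y \<subseteq> G i) \<longrightarrow>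
      (let X = proj_limit I le Xs f;
           \<tau> = initial_topology X I (\<lambda>i x. x i) T;
           \<F> = initial_sigma X I (\<lambda>i x. x i) G
       in (\<forall>x\<in>X. local_basis \<tau> x {(\<lambda>x. x i) -` V \<inter> X | i V. i \<in> I \<and> V \<in> \<V> i (x i)}) \<and>
          (\<forall>x\<in>X. \<exists>\<W>. local_basis \<tau> x \<W> \<and> \<W> \<subseteq> \<F>)))"
proof (intro conjI allI impI)
  fix f1 :: "'a::real_vector \<Rightarrow> 'c::real_vector" and T1 :: "'c topology" and G1 :: "'c set set" and \<V> :: "'c \<Rightarrow> 'c set set"
  assume H: "locally_measurable_vs UNIV T1 G1 \<and> linear f1 \<and> (\<forall>y. local_basis T1 y (\<V> y) \<and> \<V> y \<subseteq> G1)"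
  have lb: "\<And>x. local_basis (pullback_topology UNIV f1 T1) x {f1 -` V | V. V \<in> \<V> (f1 x)}"
    using part_a H by blast
  have sub: "\<And>x. {f1 -` V | V. V \<in> \<V> (f1 x)} \<subseteq> sigma_sets UNIV {f1 -` A | A. A \<in> G1}"
    using H by (auto intro: sigma_sets.Basic)
  show "let \<tau> = pullback_topology UNIV f1 T1; \<F> = sigma_sets UNIV {f1 -` A | A. A \<in> G1}
       in (\<forall>x. local_basis \<tau> x {f1 -` V | V. V \<in> \<V> (f1 x)}) \<and>
          (\<forall>x. \<exists>\<W>. local_basis \<tau> x \<W> \<and> \<W> \<subseteq> \<F>)"
    unfolding Let_def using lb sub by blast
next
  fix I :: "'i set" and le and Xs :: "'i \<Rightarrow> 'b::real_vector set" and T :: "'i \<Rightarrow> 'b topology" and G :: "'i \<Rightarrow> 'b set set" and f :: "'i \<Rightarrow> 'i \<Rightarrow> 'b \<Rightarrow> 'b" and \<V> :: "'i \<Rightarrow> 'b \<Rightarrow> 'b set set"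
  assume H: "projective_system I le Xs T G f \<and>
      (\<forall>i\<in>I. \<forall>y\<in>Xs i. local_basis (T i) y (\<V> i y) \<and> \<V> i y \<subseteq> G i)"
  define X where "X = proj_limit I le Xs f"
  have lb: "\<And>x. x \<in> X \<Longrightarrow> local_basis (initial_topology X I (\<lambda>i x. x i) T) x
           {(\<lambda>x. x i) -` V \<inter> X | i V. i \<in> I \<and> V \<in> \<V> i (x i)}"
    using part_b H X_def by blast
  have xi: "\<And>x i. x \<in> X \<Longrightarrow> i \<in> I \<Longrightarrow> x i \<in> Xs i" using X_def unfolding proj_limit_def by (auto simp: PiE_iff)
  have sub: "\<And>x. x \<in> X \<Longrightarrow> {(\<lambda>x. x i) -` V \<inter> X | i V. i \<in> I \<and> V \<in> \<V> i (x i)} \<subseteq> initial_sigma X I (\<lambda>i x. x i) G"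
  proof safe
    fix x i V assume "x \<in> X" "i \<in> I" "V \<in> \<V> i (x i)"
    then have "V \<in> G i" using H xi by blast
    then show "(\<lambda>x. x i) -` V \<inter> X \<in> initial_sigma X I (\<lambda>i x. x i) G"
      unfolding initial_sigma_def using \<open>i \<in> I\<close> by (intro sigma_sets.Basic) blast
  qed
  show "let X = proj_limit I le Xs f; \<tau> = initial_topology X I (\<lambda>i x. x i) T;
           \<F> = initial_sigma X I (\<lambda>i x. x i) G
       in (\<forall>x\<in>X. local_basis \<tau> x {(\<lambda>x. x i) -` V \<inter> X | i V. i \<in> I \<and> V \<in> \<V> i (x i)}) \<and>
          (\<forall>x\<in>X. \<exists>\<W>. local_basis \<tau> x \<W> \<and> \<W> \<subseteq> \<F>)"
    unfolding Let_def X_def[symmetric] using lb sub by blast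
qed

end
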